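(* A connected GSC $F=F(N,\mathcal D)$ is fragile if and only if there is a point $x\in F$ such that deleting from the labelled first Hata graph all edges labelled $x$ yields a disconnected graph.
   Context: GSC: $N\ge2$, $\mathcal D\subset\{0,\dots,N-1\}^2$ with $1<|\mathcal D|<N^2$, $\varphi_i(x)=\frac1N(x+i)$, $F$ the attractor $F=\bigcup_{i\in\mathcal D}\varphi_i(F)$. The first Hata graph $\Gamma_1$ has vertex set $\mathcal D$ and an edge between distinct $i,j$ iff $\varphi_i(F)\cap\varphi_j(F)\ne\varnothing$. In the labelled first Hata graph, an edge $\{i,j\}$ carries the label $x\in F$ iff $\varphi_i(F)\cap\varphi_j(F)=\{x\}$ (edges whose intersection is not a singleton carry no label). $F$ is fragile if there is a partition $\mathcal D=\mathcal D_1\cup\mathcal D_2$ into disjoint nonempty sets with $\big(\bigcup_{i\in\mathcal D_1}\varphi_i(F)\big)\cap\big(\bigcup_{i\in\mathcal D_2}\varphi_i(F)\big)$ a singleton. *)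

theory Defs
  imports "HOL-Analysis.Analysis"
begin

definition gsc_map :: "nat \<Rightarrow> nat \<times> nat \<Rightarrow> real \<times> real \<Rightarrow> real \<times> real" where
  "gsc_map N i x = (1 / real N) *\<^sub>R (x + (real (fst i), real (snd i)))"

definition is_GSC :: "nat \<Rightarrow> (nat \<times> nat) set \<Rightarrow> bool" where
  "is_GSC N D \<longleftrightarrow> N \<ge> 2 \<and> D \<subseteq> {0..<N} \<times> {0..<N} \<and> 1 < card D \<and> card D < N ^ 2"

text \<open>The attractor: the unique nonempty compact set F with F = union of the images
  (uniqueness and existence by Hutchinson's theorem).\<close>
definition gsc_attractor :: "nat \<Rightarrow> (nat \<times> nat) set \<Rightarrow> (real \<times> real) set" where
  "gsc_attractor N D = (THE F. compact F \<and> F \<noteq> {} \<and> F = (\<Union>i\<in>D. gsc_map N i ` F))"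

definition hata_edge :: "nat \<Rightarrow> (nat \<times> nat) set \<Rightarrow> nat \<times> nat \<Rightarrow> nat \<times> nat \<Rightarrow> bool" where
  "hata_edge N D i j \<longleftrightarrow> i \<in> D \<and> j \<in> D \<and> i \<noteq> j \<and>
     gsc_map N i ` gsc_attractor N D \<inter> gsc_map N j ` gsc_attractor N D \<noteq> {}"

definition hata_label :: "nat \<Rightarrow> (nat \<times> nat) set \<Rightarrow> nat \<times> nat \<Rightarrow> nat \<times> nat \<Rightarrow> real \<times> real \<Rightarrow> bool" where
  "hata_label N D i j x \<longleftrightarrow>
     gsc_map N i ` gsc_attractor N D \<inter> gsc_map N j ` gsc_attractor N D = {x}"

definition graph_connected :: "'a set \<Rightarrow> ('a \<Rightarrow> 'a \<Rightarrow> bool) \<Rightarrow> bool" where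
  "graph_connected V E \<longleftrightarrow>
     (\<forall>u\<in>V. \<forall>v\<in>V. (u, v) \<in> {(a, b). a \<in> V \<and> b \<in> V \<and> (E a b \<or> E b a)}\<^sup>*)"

definition fragile :: "nat \<Rightarrow> (nat \<times> nat) set \<Rightarrow> bool" where
  "fragile N D \<longleftrightarrow> (\<exists>D1 D2. D1 \<noteq> {} \<and> D2 \<noteq> {} \<and> D1 \<inter> D2 = {} \<and> D1 \<union> D2 = D \<and>
     (\<exists>x. (\<Union>i\<in>D1. gsc_map N i ` gsc_attractor N D) \<inter>
          (\<Union>i\<in>D2. gsc_map N i ` gsc_attractor N D) = {x}))"

end

theory Submission
  imports Defs
begin

lemma gm_dist:
  assumes "N > 0"
  shows "dist (gsc_map N i a) (gsc_map N i b) = dist a b / real N"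
proof -
  have "gsc_map N i a - gsc_map N i b = (1 / real N) *\<^sub>R (a - b)"
    unfolding gsc_map_def by (simp add: algebra_simps)
  then show ?thesis using assms by (simp add: dist_norm)
qed

lemma gm_cont: "continuous_on S (gsc_map N i)"
  unfolding gsc_map_def by (intro continuous_intros)

lemma gm_inj:
  assumes "N > 0" "gsc_map N i a = gsc_map N i b"
  shows "a = b"
proof -
  have "dist (gsc_map N i a) (gsc_map N i b) = 0" using assms by simp
  then have "dist a b = 0" using gm_dist[OF assms(1)] assms(1) by simp
  then show ?thesis by simp
qed

lemma approx:
  assumes N: "N \<ge> 2" and "G \<noteq> {}"
    and F: "F = (\<Union>i\<in>D. gsc_map N i ` F)"
    and G: "G = (\<Union>i\<in>D. gsc_map N i ` G)"
    and B: "\<forall>x\<in>F. \<forall>y\<in>G. dist x y \<le> B"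
  shows "\<forall>x\<in>F. \<exists>z\<in>G. dist x z \<le> B / real N ^ n"
proof (induction n)
  case 0
  then show ?case using B \<open>G \<noteq> {}\<close> by fastforce
next
  case (Suc n)
  show ?case
  proof
    fix x assume "x \<in> F"
    then obtain i y where i: "i \<in> D" "y \<in> F" "x = gsc_map N i y"
      using F by blast
    then obtain z where z: "z \<in> G" "dist y z \<le> B / real N ^ n" using Suc by blast
    have "gsc_map N i z \<in> G" using G i z by blast
    moreover have "dist x (gsc_map N i z) = dist y z / real N"
      using i gm_dist N by simp
    moreover have "dist y z / real N \<le> B / real N ^ Suc n"
      using z N by (simp add: divide_right_mono field_simps)
    ultimately show "\<exists>z\<in>G. dist x z \<le> B / real N ^ Suc n" by metis
  qed
qed

lemma uniq_sub:
  assumes N: "N \<ge> 2" and cF: "compact F" and cG: "compact G" and "G \<noteq> {}"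
    and F: "F = (\<Union>i\<in>D. gsc_map N i ` F)"
    and G: "G = (\<Union>i\<in>D. gsc_map N i ` G)"
  shows "F \<subseteq> G"
proof
  fix x assume x: "x \<in> F"
  define B where "B = diameter (F \<union> G)"
  have bd: "bounded (F \<union> G)" using cF cG by (simp add: compact_imp_bounded)
  have "\<forall>x\<in>F. \<forall>y\<in>G. dist x y \<le> B"
    unfolding B_def using diameter_bounded_bound[OF bd] by blast
  note ap = approx[OF N \<open>G \<noteq> {}\<close> F G this]
  have "x \<in> closure G"
    unfolding closure_approachable
  proof (intro allI impI)
    fix e :: real assume e: "e > 0"
    have "1 < real N" using N by simp
    then obtain n where n: "B / e < real N ^ n" using real_arch_pow by blast
    have pos: "real N ^ n > 0" using N by simp
    then have "B / real N ^ n < e" using n e by (simp add: field_simps)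
    then obtain z where "z \<in> G" "dist x z < e" using ap x
      by (meson le_less_trans)
    then show "\<exists>y\<in>G. dist y x < e" by (metis dist_commute)
  qed
  then show "x \<in> G" using cG by (simp add: compact_imp_closed closure_closed)
qed

lemma gm_Q:
  assumes "N \<ge> 2" "i \<in> {0..<N} \<times> {0..<N}" "x \<in> {0..1::real} \<times> {0..1::real}"
  shows "gsc_map N i x \<in> {0..1} \<times> {0..1}"
proof -
  obtain a b where x: "x = (a, b)" by force
  obtain p q where i: "i = (p, q)" by force
  have N: "real N \<ge> 2" using assms by simp
  have p: "real p + 1 \<le> real N" "real q + 1 \<le> real N" using assms(2) i by auto
  have ab: "0 \<le> a" "a \<le> 1" "0 \<le> b" "b \<le> 1" using assms(3) x by auto
  have "(a + real p) / real N \<le> 1" "(b + real q) / real N \<le> 1"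
    using N p ab by (simp_all add: divide_le_eq)
  moreover have "0 \<le> (a + real p) / real N" "0 \<le> (b + real q) / real N"
    using N ab by simp_all
  ultimately show ?thesis unfolding gsc_map_def x i by simp
qed

lemma existence:
  assumes "is_GSC N D"
  shows "\<exists>F. compact F \<and> F \<noteq> {} \<and> F = (\<Union>i\<in>D. gsc_map N i ` F)"
proof -
  have N: "N \<ge> 2" and Dsub: "D \<subseteq> {0..<N} \<times> {0..<N}" and fin: "finite D" and Dne: "D \<noteq> {}"
    using assms unfolding is_GSC_def by (auto intro: card_ge_0_finite)
  define Phi where "Phi = (\<lambda>S. \<Union>i\<in>D. gsc_map N i ` S)"
  define Q where "Q = {0..1::real} \<times> {0..1::real}"
  define K where "K = (\<lambda>n. (Phi ^^ n) Q)"
  have K0: "K 0 = Q" and KS: "\<And>n. K (Suc n) = Phi (K n)" unfolding K_def by simp_all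
  have Phimono: "\<And>S T. S \<subseteq> T \<Longrightarrow> Phi S \<subseteq> Phi T" unfolding Phi_def by blast
  have cK: "compact (K n)" for n
  proof (induction n)
    case 0 then show ?case by (simp add: K0 Q_def compact_Times)
  next
    case (Suc n) then show ?case unfolding KS Phi_def
      by (intro compact_UN fin compact_continuous_image gm_cont)
  qed
  have neK: "K n \<noteq> {}" for n
  proof (induction n)
    case 0 then show ?case by (simp add: K0 Q_def)
  next
    case (Suc n) then show ?case unfolding KS Phi_def using Dne by blast
  qed
  have decS: "K (Suc n) \<subseteq> K n" for n
  proof (induction n)
    case 0 
    have "Phi Q \<subseteq> Q" unfolding Phi_def Q_def using gm_Q[OF N] Dsub by blast
    then show ?case by (simp add: K0 KS)
  next
    case (Suc n) then show ?case unfolding KS[of "Suc n"] KS[of n] by (rule Phimono)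
  qed
  have dec: "m \<le> n \<Longrightarrow> K n \<subseteq> K m" for m n
    using lift_Suc_antimono_le[of K, OF decS] by blast
  define F where "F = \<Inter>(range K)"
  have "F \<noteq> {}" unfolding F_def by (rule compact_nest[OF cK neK dec])
  have "F = K 0 \<inter> \<Inter>(range K)" unfolding F_def by blast
  moreover have "closed (\<Inter>(range K))" using cK by (simp add: compact_imp_closed closed_INT)
  ultimately have "compact F" using cK[of 0] by (simp add: compact_Int_closed)
  have "Phi F \<subseteq> F"
  proof
    fix x assume "x \<in> Phi F"
    then obtain i y where "i \<in> D" "y \<in> F" "x = gsc_map N i y" unfolding Phi_def by blast
    then have "x \<in> K (Suc n)" for n unfolding KS Phi_def F_def by blast
    then show "x \<in> F" unfolding F_def using decS by blast
  qed
  moreover have "F \<subseteq> Phi F"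
  proof
    fix x assume xF: "x \<in> F"
    show "x \<in> Phi F"
    proof (rule ccontr)
      assume nx: "x \<notin> Phi F"
      have "\<exists>n. x \<notin> gsc_map N i ` K n" if i: "i \<in> D" for i
      proof (rule ccontr)
        assume "\<not> ?thesis"
        then have all: "\<forall>n. x \<in> gsc_map N i ` K n" by blast
        then obtain y0 where y0: "y0 \<in> K 0" "x = gsc_map N i y0" by blast
        have "y0 \<in> K n" for n
        proof -
          obtain y where "y \<in> K n" "x = gsc_map N i y" using all by blast
          then show ?thesis using y0 gm_inj[of N i y0 y] N by auto
        qed
        then have "y0 \<in> F" unfolding F_def by blast
        then show False using nx y0 i unfolding Phi_def by blast
      qed
      then obtain f where f: "\<And>i. i \<in> D \<Longrightarrow> x \<notin> gsc_map N i ` K (f i)" by metis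
      define m where "m = Max (f ` D)"
      have "x \<notin> gsc_map N i ` K m" if "i \<in> D" for i
      proof -
        have "f i \<le> m" unfolding m_def using fin that by simp
        then show ?thesis using dec[of "f i" m] f[OF that] by blast
      qed
      then have "x \<notin> K (Suc m)" unfolding KS Phi_def by blast
      then show False using xF unfolding F_def by blast
    qed
  qed
  ultimately show ?thesis using \<open>compact F\<close> \<open>F \<noteq> {}\<close> unfolding Phi_def by blast
qed

lemma attractor:
  assumes "is_GSC N D"
  shows "compact (gsc_attractor N D) \<and> gsc_attractor N D \<noteq> {} \<and>
    gsc_attractor N D = (\<Union>i\<in>D. gsc_map N i ` gsc_attractor N D)"
proof -
  have N: "N \<ge> 2" using assms unfolding is_GSC_def by simp
  obtain F where F: "compact F \<and> F \<noteq> {} \<and> F = (\<Union>i\<in>D. gsc_map N i ` F)"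
    using existence[OF assms] by blast
  show ?thesis unfolding gsc_attractor_def
  proof (rule theI[of _ F])
    show "compact F \<and> F \<noteq> {} \<and> F = (\<Union>i\<in>D. gsc_map N i ` F)" by (rule F)
  next
    fix G assume G: "compact G \<and> G \<noteq> {} \<and> G = (\<Union>i\<in>D. gsc_map N i ` G)"
    show "G = F" using uniq_sub[OF N, of G F D] uniq_sub[OF N, of F G D] F G by blast
  qed
qed


theorem mainTheorem11:
  fixes N :: nat and D :: "(nat \<times> nat) set"
  assumes "is_GSC N D"
    and "connected (gsc_attractor N D)"
  shows "fragile N D \<longleftrightarrow>
    (\<exists>x\<in>gsc_attractor N D.
       \<not> graph_connected D (\<lambda>i j. hata_edge N D i j \<and> \<not> hata_label N D i j x))"
proof -
  define F where "F = gsc_attractor N D"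
  define P where "P = (\<lambda>i. gsc_map N i ` F)"
  have att: "compact F" "F \<noteq> {}" "F = (\<Union>i\<in>D. P i)"
    using attractor[OF assms(1)] unfolding F_def P_def by auto
  have fin: "finite D" using assms(1) unfolding is_GSC_def by (auto intro: card_ge_0_finite)
  have cP: "closed (P i)" for i unfolding P_def
    by (intro compact_imp_closed compact_continuous_image gm_cont att(1))
  have neP: "P i \<noteq> {}" for i unfolding P_def using att(2) by blast
  have edge: "hata_edge N D i j \<longleftrightarrow> i \<in> D \<and> j \<in> D \<and> i \<noteq> j \<and> P i \<inter> P j \<noteq> {}" for i j
    unfolding hata_edge_def P_def F_def by simp
  have lab: "hata_label N D i j x \<longleftrightarrow> P i \<inter> P j = {x}" for i j x
    unfolding hata_label_def P_def F_def by simp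
  show ?thesis
  proof
    assume "fragile N D"
    then obtain D1 D2 x where D12: "D1 \<noteq> {}" "D2 \<noteq> {}" "D1 \<inter> D2 = {}" "D1 \<union> D2 = D"
      and X: "(\<Union>i\<in>D1. P i) \<inter> (\<Union>i\<in>D2. P i) = {x}"
      unfolding fragile_def P_def F_def by blast
    have cross: "P a \<inter> P b = {x}" if "a \<in> D1" "b \<in> D2" "P a \<inter> P b \<noteq> {}" for a b
    proof -
      have "P a \<inter> P b \<subseteq> {x}" using X that by blast
      then show ?thesis using that(3) by blast
    qed
    have xF: "x \<in> F" using X att(3) D12 by blast
    define R where "R = {(a, b). a \<in> D \<and> b \<in> D \<and>
        ((hata_edge N D a b \<and> \<not> hata_label N D a b x) \<or> (hata_edge N D b a \<and> \<not> hata_label N D b a x))}"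
    obtain u v where uv: "u \<in> D1" "v \<in> D2" using D12 by blast
    have "w \<in> D1" if "(u, w) \<in> R\<^sup>*" for w
      using that
    proof (induction rule: rtrancl_induct)
      case base then show ?case by (rule uv)
    next
      case (step a b)
      show ?case
      proof (rule ccontr)
        assume "b \<notin> D1"
        then have b2: "b \<in> D2" using step(2) D12 unfolding R_def by blast
        from step(2) consider "P a \<inter> P b \<noteq> {}" "P a \<inter> P b \<noteq> {x}"
          | "P b \<inter> P a \<noteq> {}" "P b \<inter> P a \<noteq> {x}"
          unfolding R_def edge lab by blast
        then show False
          using cross[OF step(3) b2] by (cases; auto simp: Int_commute)
      qed
    qed
    then have "(u, v) \<notin> R\<^sup>*" using uv D12 by blast
    then have "\<not> graph_connected D (\<lambda>i j. hata_edge N D i j \<and> \<not> hata_label N D i j x)"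
      unfolding graph_connected_def R_def using uv D12 by blast
    then show "\<exists>x\<in>gsc_attractor N D.
       \<not> graph_connected D (\<lambda>i j. hata_edge N D i j \<and> \<not> hata_label N D i j x)"
      using xF unfolding F_def by blast
  next
    assume "\<exists>x\<in>gsc_attractor N D.
       \<not> graph_connected D (\<lambda>i j. hata_edge N D i j \<and> \<not> hata_label N D i j x)"
    then obtain x where "\<not> graph_connected D (\<lambda>i j. hata_edge N D i j \<and> \<not> hata_label N D i j x)"
      by blast
    then obtain u v where uv: "u \<in> D" "v \<in> D" and nr: "(u, v) \<notin> {(a, b). a \<in> D \<and> b \<in> D \<and>
        ((hata_edge N D a b \<and> \<not> hata_label N D a b x) \<or> (hata_edge N D b a \<and> \<not> hata_label N D b a x))}\<^sup>*"
      unfolding graph_connected_def by blast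
    define R where "R = {(a, b). a \<in> D \<and> b \<in> D \<and>
        ((hata_edge N D a b \<and> \<not> hata_label N D a b x) \<or> (hata_edge N D b a \<and> \<not> hata_label N D b a x))}"
    define D1 where "D1 = {w \<in> D. (u, w) \<in> R\<^sup>*}"
    define D2 where "D2 = D - D1"
    have u1: "u \<in> D1" unfolding D1_def using uv by simp
    have nr': "(u, v) \<notin> R\<^sup>*" using nr unfolding R_def .
    have "v \<notin> D1"
    proof
      assume "v \<in> D1"
      then have "(u, v) \<in> R\<^sup>*" unfolding D1_def by (metis (no_types, lifting) mem_Collect_eq)
      then show False using nr' by contradiction
    qed
    then have v2: "v \<in> D2" unfolding D2_def using uv(2) by (intro DiffI)
    have cross: "P i \<inter> P j \<subseteq> {x}" if i: "i \<in> D1" and j: "j \<in> D2" for i j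
    proof (rule ccontr)
      assume c: "\<not> ?thesis"
      then have ne: "P i \<inter> P j \<noteq> {}" "P i \<inter> P j \<noteq> {x}" by auto
      have "i \<noteq> j" "i \<in> D" "j \<in> D" using i j unfolding D1_def D2_def by auto
      then have "(i, j) \<in> R" unfolding R_def edge lab using ne by blast
      then have "(u, j) \<in> R\<^sup>*" using i unfolding D1_def by auto
      then show False using j unfolding D1_def D2_def by auto
    qed
    define A1 where "A1 = (\<Union>i\<in>D1. P i)"
    define A2 where "A2 = (\<Union>i\<in>D2. P i)"
    have sub: "A1 \<inter> A2 \<subseteq> {x}" unfolding A1_def A2_def using cross by blast
    have fin1: "finite D1" "finite D2" using fin unfolding D1_def D2_def by auto
    have cl: "closed A1" "closed A2" unfolding A1_def A2_def using fin1 cP by auto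
    have cov: "F \<subseteq> A1 \<union> A2" unfolding A1_def A2_def D2_def using att(3) D1_def by blast
    have ne1: "A1 \<inter> F \<noteq> {}" unfolding A1_def using u1 neP att(3) uv by blast
    have ne2: "A2 \<inter> F \<noteq> {}" unfolding A2_def using v2 neP att(3) uv by blast
    have "A1 \<inter> A2 \<inter> F \<noteq> {}"
      using assms(2)[folded F_def] cl cov ne1 ne2 unfolding connected_closed by blast
    then have "A1 \<inter> A2 = {x}" using sub by blast
    moreover have "D1 \<noteq> {}" using u1 by blast
    moreover have "D2 \<noteq> {}" using v2 by blast
    moreover have "D1 \<inter> D2 = {}" unfolding D2_def by blast
    moreover have "D1 \<subseteq> D" unfolding D1_def by blast
    then have "D1 \<union> D2 = D" unfolding D2_def by blast
    ultimately show "fragile N D" unfolding fragile_def A1_def A2_def P_def F_def by blast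
  qed
qed

end
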